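(* Let $\theta_{\min}\ge 1/2$, and let $\mathcal S$ be a compatible community of a population with minimum participation threshold $\theta_{\min}$, with $|\mathcal S|\ge k$. Then there exist at least $k(2\theta_{\min}-1)$ users $i\in\mathcal S$ which are compatible with all other users in $\mathcal S$, i.e., whose speech point $p_i$ lies in $[l_j,r_j]$ for every $j\in\mathcal S$.
   Context: Users $1,\dots,n$ each have a closed interval $[l_i,r_i]$, a speech point $p_i\in[l_i,r_i]$ and a participation threshold $\theta_i\in[0,1]$, with $\theta_{\min}=\min_i\theta_i$. A set $\mathcal S$ of users is a compatible community if for every $i\in\mathcal S$, $|\{j\in\mathcal S\setminus\{i\}:p_j\in[l_i,r_i]\}|\ge\theta_i|\mathcal S\setminus\{i\}|$. *)

theory Defs
  imports Complex_Main
begin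

definition population ::
  "'u set \<Rightarrow> ('u \<Rightarrow> real) \<Rightarrow> ('u \<Rightarrow> real) \<Rightarrow> ('u \<Rightarrow> real) \<Rightarrow> ('u \<Rightarrow> real) \<Rightarrow> bool" where
  "population U l r p theta \<longleftrightarrow> finite U \<and> U \<noteq> {} \<and>
     (\<forall>i\<in>U. l i \<le> p i \<and> p i \<le> r i \<and> 0 \<le> theta i \<and> theta i \<le> 1)"

definition theta_min :: "'u set \<Rightarrow> ('u \<Rightarrow> real) \<Rightarrow> real" where
  "theta_min U theta = Min (theta ` U)"

definition compatible_community ::
  "'u set \<Rightarrow> ('u \<Rightarrow> real) \<Rightarrow> ('u \<Rightarrow> real) \<Rightarrow> ('u \<Rightarrow> real) \<Rightarrow> ('u \<Rightarrow> real) \<Rightarrow> 'u set \<Rightarrow> bool" where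
  "compatible_community U l r p theta S \<longleftrightarrow> S \<subseteq> U \<and>
     (\<forall>i\<in>S. real (card {j \<in> S - {i}. p j \<in> {l i..r i}}) \<ge> theta i * real (card (S - {i})))"

end

theory Submission
  imports Defs
begin

lemma side_bound:
  fixes p l r :: "'u \<Rightarrow> real" and m :: real
  assumes fin: "finite S"
    and cnt: "\<forall>j\<in>S. real (card {x\<in>S. p x \<in> {l j..r j}}) \<ge> m"
    and ne: "S \<noteq> {}"
  shows "real (card {i\<in>S. \<exists>j\<in>S. p i < l j}) + m \<le> real (card S)"
proof (cases "{i\<in>S. \<exists>j\<in>S. p i < l j} = {}")
  case True
  obtain j where j: "j \<in> S" using ne by blast
  have "card {x\<in>S. p x \<in> {l j..r j}} \<le> card S" using fin by (intro card_mono) auto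
  have "m \<le> real (card {x\<in>S. p x \<in> {l j..r j}})" using cnt j by blast
  moreover have "real (card {x\<in>S. p x \<in> {l j..r j}}) \<le> real (card S)" using \<open>card {x\<in>S. p x \<in> {l j..r j}} \<le> card S\<close> by simp
  ultimately show ?thesis unfolding True by simp
next
  case False
  define A where "A = {i\<in>S. \<exists>j\<in>S. p i < l j}"
  have finA: "finite A" using fin A_def by auto
  have "A \<noteq> {}" using False A_def by simp
  then have "Max (p ` A) \<in> p ` A" using finA by simp
  then obtain i0 where i00: "i0 \<in> A" "p i0 = Max (p ` A)" by force
  then have i0: "i0 \<in> A" "\<forall>y\<in>A. p y \<le> p i0" using finA by auto
  then obtain j where j: "j \<in> S" "p i0 < l j" using A_def by auto
  define C where "C = {x\<in>S. p x \<in> {l j..r j}}"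
  have disj: "A \<inter> C = {}"
  proof -
    { fix x assume "x \<in> A" "x \<in> C"
      then have "p x \<le> p i0" "p x \<ge> l j" using i0 C_def by auto
      with j have False by simp }
    then show ?thesis by blast
  qed
  have "card (A \<union> C) \<le> card S" using fin by (intro card_mono) (auto simp: A_def C_def)
  moreover have "card (A \<union> C) = card A + card C"
    using disj finA fin C_def by (intro card_Un_disjoint) auto
  moreover have "real (card C) \<ge> m" using cnt j C_def by auto
  ultimately show ?thesis unfolding A_def by linarith
qed

theorem lemma16:
  fixes U S :: "'u set" and l r p theta :: "'u \<Rightarrow> real" and k :: nat
  assumes "population U l r p theta"
    and "theta_min U theta \<ge> 1/2"
    and "compatible_community U l r p theta S"
    and "card S \<ge> k"
  shows "real (card {i \<in> S. \<forall>j\<in>S. p i \<in> {l j..r j}}) \<ge> real k * (2 * theta_min U theta - 1)"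
proof (cases "S = {}")
  case True
  then show ?thesis using assms(4) by simp
next
  case ne: False
  define t where "t = theta_min U theta"
  define n where "n = card S"
  have finU: "finite U" and SU: "S \<subseteq> U" using assms(1,3)
    unfolding population_def compatible_community_def by auto
  have fin: "finite S" using finU SU finite_subset by blast
  have t1: "t \<le> 1"
  proof -
    obtain i where "i \<in> S" using ne by blast
    then have "t \<le> theta i" unfolding t_def theta_min_def using SU finU by auto
    moreover have "theta i \<le> 1" using assms(1) \<open>i \<in> S\<close> SU unfolding population_def by blast
    ultimately show ?thesis by linarith
  qed
  have cnt: "\<forall>j\<in>S. real (card {x\<in>S. p x \<in> {l j..r j}}) \<ge> t * (real n - 1) + 1"
  proof
    fix j assume j: "j \<in> S"
    have tj: "t \<le> theta j" unfolding t_def theta_min_def using SU finU j by auto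
    have pj: "p j \<in> {l j..r j}" using assms(1) j SU unfolding population_def by auto
    have cc: "real (card {x \<in> S - {j}. p x \<in> {l j..r j}}) \<ge> theta j * real (card (S - {j}))"
      using assms(3) j unfolding compatible_community_def by auto
    have cS: "real (card (S - {j})) = real n - 1" using j fin n_def 
    proof -
      have "card S > 0" using j fin card_gt_0_iff by blast
      then have "card S \<ge> 1" by simp
      then show ?thesis using card_Diff_singleton[OF j] n_def by (simp add: of_nat_diff)
    qed
    have "t * (real n - 1) \<le> theta j * (real n - 1)"
      using tj cS by (intro mult_right_mono) auto
    have eq: "{x\<in>S. p x \<in> {l j..r j}} = insert j {x \<in> S - {j}. p x \<in> {l j..r j}}"
      using j pj by auto
    have "card {x\<in>S. p x \<in> {l j..r j}} = card {x \<in> S - {j}. p x \<in> {l j..r j}} + 1"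
      unfolding eq using fin by (subst card_insert_disjoint) auto
    then show "real (card {x\<in>S. p x \<in> {l j..r j}}) \<ge> t * (real n - 1) + 1"
      using cc cS \<open>t * (real n - 1) \<le> theta j * (real n - 1)\<close> by simp
  qed
  define A where "A = {i\<in>S. \<exists>j\<in>S. p i < l j}"
  define B where "B = {i\<in>S. \<exists>j\<in>S. p i > r j}"
  have hA: "real (card A) + (t * (real n - 1) + 1) \<le> real n"
    using side_bound[OF fin cnt ne] A_def n_def by simp
  have cnt': "\<forall>j\<in>S. real (card {x\<in>S. (\<lambda>x. - p x) x \<in> {(\<lambda>j. - r j) j..(\<lambda>j. - l j) j}}) \<ge> t * (real n - 1) + 1"
  proof
    fix j assume "j \<in> S"
    have "{x\<in>S. - p x \<in> {- r j..- l j}} = {x\<in>S. p x \<in> {l j..r j}}" by auto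
    then show "real (card {x\<in>S. (\<lambda>x. - p x) x \<in> {(\<lambda>j. - r j) j..(\<lambda>j. - l j) j}}) \<ge> t * (real n - 1) + 1"
      using cnt \<open>j \<in> S\<close> by simp
  qed
  have hB: "real (card B) + (t * (real n - 1) + 1) \<le> real n"
    using side_bound[OF fin cnt' ne] B_def n_def by simp
  have sub: "S \<subseteq> A \<union> B \<union> {i \<in> S. \<forall>j\<in>S. p i \<in> {l j..r j}}"
  proof
    fix i assume iS: "i \<in> S"
    show "i \<in> A \<union> B \<union> {i \<in> S. \<forall>j\<in>S. p i \<in> {l j..r j}}"
    proof (cases "i \<in> A \<or> i \<in> B")
      case True then show ?thesis by blast
    next
      case False
      then have "\<forall>j\<in>S. \<not> p i < l j \<and> \<not> p i > r j" using iS unfolding A_def B_def by blast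
      then have "\<forall>j\<in>S. p i \<in> {l j..r j}" by (simp add: not_less)
      then show ?thesis using iS by blast
    qed
  qed
  have "card S \<le> card (A \<union> B \<union> {i \<in> S. \<forall>j\<in>S. p i \<in> {l j..r j}})"
    using fin by (intro card_mono[OF _ sub]) (auto simp: A_def B_def)
  also have "\<dots> \<le> card A + card B + card {i \<in> S. \<forall>j\<in>S. p i \<in> {l j..r j}}"
    using card_Un_le[of "A \<union> B" "{i \<in> S. \<forall>j\<in>S. p i \<in> {l j..r j}}"] card_Un_le[of A B] by linarith
  finally have tot: "real n \<le> real (card A) + real (card B) + real (card {i \<in> S. \<forall>j\<in>S. p i \<in> {l j..r j}})"
    using n_def by linarith
  have e0: "real k * (2 * t - 1) \<le> real n * (2 * t - 1)"
    using assms(2,4) t_def n_def by (intro mult_right_mono) auto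
  define g where "g = real (card {i \<in> S. \<forall>j\<in>S. p i \<in> {l j..r j}})"
  define X where "X = t * (real n - 1)"
  have g1: "g \<ge> 2 * X + 2 - real n" using tot hA hB unfolding g_def X_def[symmetric] by linarith
  have e3: "2 * X + 2 - real n - real n * (2 * t - 1) = 2 - 2 * t" unfolding X_def by (simp add: algebra_simps)
  have "real k * (2 * t - 1) \<le> g" using g1 e3 e0 t1 by linarith
  then have "real k * (2 * t - 1) \<le> real (card {i \<in> S. \<forall>j\<in>S. p i \<in> {l j..r j}})" unfolding g_def .
  then show ?thesis using t_def by simp
qed

end
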